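(* Let $\mathbb{S}=(S,\Sigma,\{\tau_a\mid a\in L\})$ be an LMP and let $\Lambda$ be a sub-$\sigma$-algebra of $\Sigma$ such that $\Sigma(\mathcal{R}(\Lambda))=\Lambda$. The following are equivalent: (1) $\Lambda$ is stable; (2) $\mathcal{R}(\Lambda)\subseteq\mathcal{R}^T(\Lambda)$; (3) $\mathcal{R}(\Lambda)$ is a state bisimulation.
   Context: An LMP is a triple $(S,\Sigma,\{\tau_a\mid a\in L\})$ with $(S,\Sigma)$ a measurable space, $L$ countable, and each $\tau_a:S\times\Sigma\to[0,1]$ a Markov kernel (subprobability measure in the second argument, measurable in the first). For $R\subseteq S\times S$, $A$ is $R$-closed if $x\in A$, $xRs$ imply $s\in A$; $\Sigma(R)$ is the family of $R$-closed members of $\Sigma$. For $\Gamma\subseteq\mathcal{P}(S)$, $\mathcal{R}(\Gamma)=\{(s,t):\forall A\in\Gamma\,(s\in A\iff t\in A)\}$; for $\Lambda\subseteq\Sigma$, $\mathcal{R}^T(\Lambda)=\{(s,t):\forall a\in L\,\forall E\in\Lambda\ \tau_a(s,E)=\tau_a(t,E)\}$. A family $\Lambda\subseteq\Sigma$ is stable if for all $A\in\Lambda$, rational $r\in[0,1]$ and $a\in L$, $\{s\in S:\tau_a(s,A)>r\}\in\Lambda$. A state bisimulation is a symmetric relation $R$ on $S$ such that whenever $sRt$ and $C\in\Sigma(R)$, $\tau_a(s,C)=\tau_a(t,C)$ for all $a\in L$. *)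

theory Defs
  imports "HOL-Probability.Probability"
begin

text \<open>An LMP: measurable space M (S = space M, Sigma = sets M), a countable label set L,
  and for each label a Markov kernel tau a, i.e. a measurable map from M into the
  Giry space of subprobability measures on M. tau_a(s,E) = measure (tau a s) E.\<close>

definition LMP :: "'a measure \<Rightarrow> 'l set \<Rightarrow> ('l \<Rightarrow> 'a \<Rightarrow> 'a measure) \<Rightarrow> bool" where
  "LMP M L \<tau> \<longleftrightarrow> countable L \<and> (\<forall>a\<in>L. \<tau> a \<in> measurable M (subprob_algebra M))"

definition kern :: "('l \<Rightarrow> 'a \<Rightarrow> 'a measure) \<Rightarrow> 'l \<Rightarrow> 'a \<Rightarrow> 'a set \<Rightarrow> real" where
  "kern \<tau> a s E = measure (\<tau> a s) E"

definition closed_sets :: "'a measure \<Rightarrow> ('a \<times> 'a) set \<Rightarrow> 'a set set" where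
  "closed_sets M R = {A \<in> sets M. \<forall>x s. x \<in> A \<and> (x, s) \<in> R \<longrightarrow> s \<in> A}"

definition rel_of :: "'a measure \<Rightarrow> 'a set set \<Rightarrow> ('a \<times> 'a) set" where
  "rel_of M \<Gamma> = {(s, t). s \<in> space M \<and> t \<in> space M \<and> (\<forall>A\<in>\<Gamma>. s \<in> A \<longleftrightarrow> t \<in> A)}"

definition relT_of :: "'a measure \<Rightarrow> 'l set \<Rightarrow> ('l \<Rightarrow> 'a \<Rightarrow> 'a measure) \<Rightarrow> 'a set set \<Rightarrow> ('a \<times> 'a) set" where
  "relT_of M L \<tau> \<Lambda> = {(s, t). s \<in> space M \<and> t \<in> space M \<and>
      (\<forall>a\<in>L. \<forall>E\<in>\<Lambda>. kern \<tau> a s E = kern \<tau> a t E)}"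

definition lmp_stable :: "'a measure \<Rightarrow> 'l set \<Rightarrow> ('l \<Rightarrow> 'a \<Rightarrow> 'a measure) \<Rightarrow> 'a set set \<Rightarrow> bool" where
  "lmp_stable M L \<tau> \<Lambda> \<longleftrightarrow> (\<forall>A\<in>\<Lambda>. \<forall>r\<in>\<rat>. 0 \<le> r \<longrightarrow> r \<le> 1 \<longrightarrow> (\<forall>a\<in>L.
      {s \<in> space M. kern \<tau> a s A > r} \<in> \<Lambda>))"

definition state_bisim :: "'a measure \<Rightarrow> 'l set \<Rightarrow> ('l \<Rightarrow> 'a \<Rightarrow> 'a measure) \<Rightarrow> ('a \<times> 'a) set \<Rightarrow> bool" where
  "state_bisim M L \<tau> R \<longleftrightarrow> R \<subseteq> space M \<times> space M \<and> sym R \<and>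
     (\<forall>s t. (s, t) \<in> R \<longrightarrow> (\<forall>C\<in>closed_sets M R. \<forall>a\<in>L. kern \<tau> a s C = kern \<tau> a t C))"

end

theory Submission
  imports Defs
begin

lemma kern_bounds:
  assumes "LMP M L \<tau>" "a \<in> L" "s \<in> space M"
  shows "0 \<le> kern \<tau> a s E \<and> kern \<tau> a s E \<le> 1"
proof -
  have K: "\<tau> a \<in> measurable M (subprob_algebra M)" using assms unfolding LMP_def by auto
  have "subprob_space (\<tau> a s)" by (rule subprob_space_kernel[OF K assms(3)])
  then show ?thesis unfolding kern_def
    by (simp add: subprob_space.subprob_measure_le_1)
qed

lemma kern_meas:
  assumes "LMP M L \<tau>" "a \<in> L" "A \<in> sets M"
  shows "(\<lambda>s. kern \<tau> a s A) \<in> borel_measurable M"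
proof -
  have K: "\<tau> a \<in> measurable M (subprob_algebra M)" using assms unfolding LMP_def by auto
  show ?thesis unfolding kern_def
    using measurable_compose[OF K measurable_measure_subprob_algebra[OF assms(3)]] by simp
qed

theorem lemma3p12:
  fixes M :: "'a measure" and L :: "'l set" and \<tau> :: "'l \<Rightarrow> 'a \<Rightarrow> 'a measure"
    and \<Lambda> :: "'a set set"
  assumes "LMP M L \<tau>"
    and "sigma_algebra (space M) \<Lambda>" and "\<Lambda> \<subseteq> sets M"
    and "closed_sets M (rel_of M \<Lambda>) = \<Lambda>"
  shows "(lmp_stable M L \<tau> \<Lambda> \<longleftrightarrow> rel_of M \<Lambda> \<subseteq> relT_of M L \<tau> \<Lambda>)
       \<and> (rel_of M \<Lambda> \<subseteq> relT_of M L \<tau> \<Lambda> \<longleftrightarrow> state_bisim M L \<tau> (rel_of M \<Lambda>))"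
proof (intro conjI iffI)
  assume st: "lmp_stable M L \<tau> \<Lambda>"
  show "rel_of M \<Lambda> \<subseteq> relT_of M L \<tau> \<Lambda>"
  proof (clarsimp simp: relT_of_def)
    fix s t assume R: "(s, t) \<in> rel_of M \<Lambda>"
    then have sp: "s \<in> space M" "t \<in> space M" and mem: "\<And>A. A \<in> \<Lambda> \<Longrightarrow> s \<in> A \<longleftrightarrow> t \<in> A"
      by (auto simp: rel_of_def)
    show "s \<in> space M \<and> t \<in> space M \<and> (\<forall>a\<in>L. \<forall>E\<in>\<Lambda>. kern \<tau> a s E = kern \<tau> a t E)"
    proof (intro conjI sp ballI)
      fix a E assume a: "a \<in> L" and E: "E \<in> \<Lambda>"
      have key: "\<And>r x y. r \<in> \<rat> \<Longrightarrow> 0 \<le> r \<Longrightarrow> r \<le> 1 \<Longrightarrow> (x,y) \<in> {(s,t),(t,s)} \<Longrightarrow>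
          kern \<tau> a x E > r \<Longrightarrow> kern \<tau> a y E > r"
      proof -
        fix r x y assume r: "r \<in> \<rat>" "0 \<le> r" "r \<le> 1" and xy: "(x,y) \<in> {(s,t),(t,s)}"
          and g: "kern \<tau> a x E > r"
        let ?B = "{s \<in> space M. kern \<tau> a s E > r}"
        have B: "?B \<in> \<Lambda>" using st r a E unfolding lmp_stable_def by blast
        have "x \<in> ?B" using xy sp g by auto
        then have "y \<in> ?B" using mem[OF B] xy by auto
        then show "kern \<tau> a y E > r" by simp
      qed
      show "kern \<tau> a s E = kern \<tau> a t E"
      proof (rule ccontr)
        assume ne: "kern \<tau> a s E \<noteq> kern \<tau> a t E"
        obtain x y where xy: "(x,y) \<in> {(s,t),(t,s)}" and lt: "kern \<tau> a y E < kern \<tau> a x E"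
          using ne by (metis insertCI linorder_neqE_linordered_idom)
        obtain r where r: "r \<in> \<rat>" "kern \<tau> a y E < r" "r < kern \<tau> a x E"
          using Rats_dense_in_real[OF lt] by blast
        have bx: "kern \<tau> a x E \<le> 1" and b0: "0 \<le> kern \<tau> a y E"
          using kern_bounds[OF assms(1) a] sp xy by auto
        have r0: "0 \<le> r" "r \<le> 1" using r bx b0 by linarith+
        have "kern \<tau> a y E > r" using key[OF r(1) r0 xy] r by linarith
        then show False using r by linarith
      qed
    qed
  qed
next
  assume sub: "rel_of M \<Lambda> \<subseteq> relT_of M L \<tau> \<Lambda>"
  show "lmp_stable M L \<tau> \<Lambda>"
    unfolding lmp_stable_def
  proof (intro ballI allI impI)
    fix A r a assume A: "A \<in> \<Lambda>" and a: "a \<in> L"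
    have As: "A \<in> sets M" using A assms(3) by auto
    have "{s \<in> space M. kern \<tau> a s A > r} \<in> closed_sets M (rel_of M \<Lambda>)"
      unfolding closed_sets_def
    proof (rule CollectI, intro conjI allI impI)
      show "{s \<in> space M. kern \<tau> a s A > r} \<in> sets M"
        using kern_meas[OF assms(1) a As] by measurable
    next
      fix x s assume h: "x \<in> {s \<in> space M. r < kern \<tau> a s A} \<and> (x, s) \<in> rel_of M \<Lambda>"
      then have "(x, s) \<in> relT_of M L \<tau> \<Lambda>" using sub by auto
      then show "s \<in> {s \<in> space M. r < kern \<tau> a s A}" using h a A
        by (auto simp: relT_of_def)
    qed
    then show "{s \<in> space M. kern \<tau> a s A > r} \<in> \<Lambda>" using assms(4) by simp
  qed
next
  assume sub: "rel_of M \<Lambda> \<subseteq> relT_of M L \<tau> \<Lambda>"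
  show "state_bisim M L \<tau> (rel_of M \<Lambda>)"
    unfolding state_bisim_def using sub assms(4)
    by (auto simp: rel_of_def relT_of_def sym_def)
next
  assume sb: "state_bisim M L \<tau> (rel_of M \<Lambda>)"
  show "rel_of M \<Lambda> \<subseteq> relT_of M L \<tau> \<Lambda>"
    using sb assms(4) unfolding state_bisim_def
    by (auto simp: rel_of_def relT_of_def)
qed

end
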